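(* A rational quotient for the action of $W'$ on $X_T(\mathfrak{B})$ is given by \[ \operatorname{Spec}\big(\mathbb C[t_\bullet,\delta_\bullet,\tilde u_\bullet,\alpha_\bullet]_{\Delta}\big)\, . \] In particular, the field $\mathbb C(X_T(\mathfrak{B}))^{W'}$ of $W'$-invariant rational functions is purely transcendental over $\mathbb C$ of degree $4n-4$.
   Context: Setting: $V_1,\dots,V_n$ are qubits (2-dimensional complex vector spaces), $\mathscr V_i=\mathfrak{sl}(V_i)$ with the bilinear form $\langle A,B\rangle=\tfrac12\operatorname{tr}(AB)$. A longitudinal system $\mathfrak{B}=(\mathscr V_1^\ell,\dots,\mathscr V_n^\ell)$ is a choice of non-degenerate lines $\mathscr V_i^\ell\subset\mathscr V_i$; $\mathscr V_i^t$ denotes the orthogonal complement (a plane). Let $X^0(\mathfrak{B})=\bigoplus_{i=1}^n\mathscr V_i^\ell$, $X^1(\mathfrak{B})=\bigoplus_{j=1}^{n-1}\mathscr V_j^t\otimes\mathscr V_n^t$ (corresponding to the star spanning tree of the complete graph $K_n$ with center vertex $n$), and $X_T(\mathfrak{B})=X^0(\mathfrak{B})\oplus X^1(\mathfrak{B})$. The group $W'=\big(\prod_{i=1}^n\mathrm{SO}(\mathscr V_i^t)\big)/\{\pm I\}$ acts on $X_T(\mathfrak{B})$ (trivially on $X^0(\mathfrak{B})$, and on each $\mathscr V_j^t\otimes\mathscr V_n^t$ via the factors $j$ and $n$). A rational quotient is a variety whose function field is isomorphic to the field of invariant rational functions. Generators: choose orthonormal bases of each $\mathscr V_i^t$, identifying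 $\mathscr V_j^t\otimes\mathscr V_n^t$ with $M_2(\mathbb C)$. For the component $M$ in the $j$-th summand ($1\le j\le n-1$), write $M^tM=2t_jI+A_j$ with $A_j=\begin{pmatrix}a_j&b_j\\ b_j&-a_j\end{pmatrix}$ traceless, and set $\delta_j=\det M$. Let $w_j^\pm$ be the coordinates of the vector $(a_j,b_j)$ in the basis $e_\pm=e_1\pm ie_2$ (so $(a_j,b_j)=w_j^-e_-+w_j^+e_+$), set $u_{jk}=4w_j^+w_k^-$, $\tilde u_{jk}=u_{jk}/(\delta_j^2-t_j^2)$ for $j\neq k$, and $\tilde u_j=\tilde u_{1j}$ for $j=2,\dots,n-1$. For an orthonormal basis $e_j$ of $\mathscr V_j^\ell$, let $\alpha_j(v)=\langle v,e_j\rangle$ on $X^0(\mathfrak{B})$, $j=1,\dots,n$. Finally $\Delta=\prod_{i=1}^{n-1}\delta_i(\delta_i^2-t_i^2)$, and $\mathbb C[t_\bullet,\delta_\bullet,\tilde u_\bullet,\alpha_\bullet]_\Delta$ is the polynomial ring in $t_1,\dots,t_{n-1},\delta_1,\dots,\delta_{n-1},\tilde u_2,\dots,\tilde u_{n-1},\alpha_1,\dots,\alpha_n$ localized at $\Delta$. *)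

theory Defs
  imports Complex_Main
begin

(* A point of X_T(B) in orthonormal coordinates:
   fst x i        = alpha_i(x)            (i = 1..n)
   snd x j a b    = entry (a,b) of the 2x2 matrix M_j  (j = 1..n-1, a,b in {0,1})
   Other components are junk and ignored by all coordinate functions. *)
type_synonym pt = "(nat \<Rightarrow> complex) \<times> (nat \<Rightarrow> nat \<Rightarrow> nat \<Rightarrow> complex)"

inductive_set polyfuns :: "('a \<Rightarrow> complex) set \<Rightarrow> ('a \<Rightarrow> complex) set"
  for V :: "('a \<Rightarrow> complex) set" where
  pf_const: "(\<lambda>x. c) \<in> polyfuns V"
| pf_var: "f \<in> V \<Longrightarrow> f \<in> polyfuns V"
| pf_add: "f \<in> polyfuns V \<Longrightarrow> g \<in> polyfuns V \<Longrightarrow> (\<lambda>x. f x + g x) \<in> polyfuns V"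
| pf_mult: "f \<in> polyfuns V \<Longrightarrow> g \<in> polyfuns V \<Longrightarrow> (\<lambda>x. f x * g x) \<in> polyfuns V"

definition XT_coords :: "nat \<Rightarrow> (pt \<Rightarrow> complex) set" where
  "XT_coords n =
     {(\<lambda>x. fst x i) | i. 1 \<le> i \<and> i \<le> n} \<union>
     {(\<lambda>x. snd x j a b) | j a b. 1 \<le> j \<and> j \<le> n - 1 \<and> a < 2 \<and> b < 2}"

definition Y_coords :: "nat \<Rightarrow> ((nat \<Rightarrow> complex) \<Rightarrow> complex) set" where
  "Y_coords m = {(\<lambda>y. y k) | k. k < m}"

(* element of SO(2,C) in an orthonormal basis: [[c,-s],[s,c]] with c^2+s^2=1 *)
definition rot :: "complex \<Rightarrow> complex \<Rightarrow> nat \<Rightarrow> nat \<Rightarrow> complex" where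
  "rot c s a b = (if a = b then c else if a = 0 then - s else s)"

definition W'_param :: "nat \<Rightarrow> (nat \<Rightarrow> complex) \<Rightarrow> (nat \<Rightarrow> complex) \<Rightarrow> bool" where
  "W'_param n rc rs \<longleftrightarrow> (\<forall>i\<in>{1..n}. (rc i)\<^sup>2 + (rs i)\<^sup>2 = 1)"

(* action of (R_1,...,R_n) in prod SO(V_i^t): trivial on X^0, M_j |-> R_j M_j R_n^T on V_j^t (x) V_n^t *)
definition W'_act :: "nat \<Rightarrow> (nat \<Rightarrow> complex) \<Rightarrow> (nat \<Rightarrow> complex) \<Rightarrow> pt \<Rightarrow> pt" where
  "W'_act n rc rs x =
     (fst x, \<lambda>j a b. if 1 \<le> j \<and> j \<le> n - 1 \<and> a < 2 \<and> b < 2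
        then (\<Sum>p<2. \<Sum>q<2. rot (rc j) (rs j) a p * snd x j p q * rot (rc n) (rs n) b q)
        else snd x j a b)"

definition MtM :: "pt \<Rightarrow> nat \<Rightarrow> nat \<Rightarrow> nat \<Rightarrow> complex" where
  "MtM x j a b = (\<Sum>p<2. snd x j p a * snd x j p b)"

(* M^T M = 2 t I + A,  A = [[a,b],[b,-a]] *)
definition tq :: "pt \<Rightarrow> nat \<Rightarrow> complex" where
  "tq x j = (MtM x j 0 0 + MtM x j 1 1) / 4"

definition aq :: "pt \<Rightarrow> nat \<Rightarrow> complex" where
  "aq x j = (MtM x j 0 0 - MtM x j 1 1) / 2"

definition bq :: "pt \<Rightarrow> nat \<Rightarrow> complex" where
  "bq x j = MtM x j 0 1"

definition delq :: "pt \<Rightarrow> nat \<Rightarrow> complex" where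
  "delq x j = snd x j 0 0 * snd x j 1 1 - snd x j 0 1 * snd x j 1 0"

(* (a,b) = w^- e_- + w^+ e_+ with e_pm = e_1 pm i e_2 *)
definition wplus :: "pt \<Rightarrow> nat \<Rightarrow> complex" where
  "wplus x j = (aq x j - \<i> * bq x j) / 2"

definition wminus :: "pt \<Rightarrow> nat \<Rightarrow> complex" where
  "wminus x j = (aq x j + \<i> * bq x j) / 2"

definition uq :: "pt \<Rightarrow> nat \<Rightarrow> nat \<Rightarrow> complex" where
  "uq x j k = 4 * wplus x j * wminus x k"

definition utq :: "pt \<Rightarrow> nat \<Rightarrow> complex" where
  "utq x j = uq x 1 j / ((delq x 1)\<^sup>2 - (tq x 1)\<^sup>2)"

definition gens :: "nat \<Rightarrow> pt \<Rightarrow> nat \<Rightarrow> complex" where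
  "gens n x k =
     (if k < n - 1 then tq x (k + 1)
      else if k < 2 * n - 2 then delq x (k - (n - 1) + 1)
      else if k < 3 * n - 4 then utq x (k - (2 * n - 2) + 2)
      else if k < 4 * n - 4 then fst x (k - (3 * n - 4) + 1)
      else 0)"

definition BigDelta :: "nat \<Rightarrow> pt \<Rightarrow> complex" where
  "BigDelta n x = (\<Prod>i\<in>{1..n - 1}. delq x i * ((delq x i)\<^sup>2 - (tq x i)\<^sup>2))"

end

theory Submission
  imports Defs "HOL-Computational_Algebra.Polynomial"
begin


lemma pf_sub: "f \<in> polyfuns V \<Longrightarrow> g \<in> polyfuns V \<Longrightarrow> (\<lambda>x. f x - g x) \<in> polyfuns V"
proof -
  assume f: "f \<in> polyfuns V" and g: "g \<in> polyfuns V"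
  have h: "(\<lambda>x. (-1::complex) * g x) \<in> polyfuns V" by (rule pf_mult[OF pf_const g])
  have "(\<lambda>x. f x + (-1) * g x) \<in> polyfuns V" using pf_add[OF f h] by simp
  then show ?thesis by simp
qed

lemma pf_divc: "f \<in> polyfuns V \<Longrightarrow> (\<lambda>x. f x / c) \<in> polyfuns V"
proof -
  assume f: "f \<in> polyfuns V"
  have "(\<lambda>x. f x * (1/c)) \<in> polyfuns V" by (rule pf_mult[OF f pf_const])
  then show ?thesis by simp
qed

lemma pf_pow: "f \<in> polyfuns V \<Longrightarrow> (\<lambda>x. f x ^ k) \<in> polyfuns V"
proof (induction k)
  case 0 then show ?case using pf_const[of 1] by simp
next
  case (Suc k)
  then show ?case using pf_mult[OF Suc.prems Suc.IH] by simp
qed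

lemma pf_sum: "finite A \<Longrightarrow> (\<And>i. i \<in> A \<Longrightarrow> (\<lambda>x. f i x) \<in> polyfuns V) \<Longrightarrow> (\<lambda>x. \<Sum>i\<in>A. f i x) \<in> polyfuns V"
proof (induction A rule: finite_induct)
  case empty then show ?case using pf_const[of 0] by simp
next
  case (insert a A)
  have "(\<lambda>x. f a x + (\<Sum>i\<in>A. f i x)) \<in> polyfuns V"
    using insert by (intro pf_add) auto
  then show ?case using insert by simp
qed

lemma pf_prod: "finite A \<Longrightarrow> (\<And>i. i \<in> A \<Longrightarrow> (\<lambda>x. f i x) \<in> polyfuns V) \<Longrightarrow> (\<lambda>x. \<Prod>i\<in>A. f i x) \<in> polyfuns V"
proof (induction A rule: finite_induct)
  case empty then show ?case using pf_const[of 1] by simp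
next
  case (insert a A)
  have "(\<lambda>x. f a x * (\<Prod>i\<in>A. f i x)) \<in> polyfuns V"
    using insert by (intro pf_mult) auto
  then show ?case using insert by simp
qed

lemma pf_line:
  assumes hV: "\<forall>v\<in>V. \<exists>p. \<forall>t. v (L t) = poly p t"
  shows "f \<in> polyfuns V \<Longrightarrow> \<exists>p. \<forall>t. f (L t) = poly p t"
proof (induction rule: polyfuns.induct)
  case (pf_const c) then show ?case by (intro exI[of _ "[:c:]"]) simp
next
  case (pf_var f) then show ?case using hV by blast
next
  case (pf_add f g)
  then obtain p q where "\<forall>t. f (L t) = poly p t" "\<forall>t. g (L t) = poly q t" by blast
  then show ?case by (intro exI[of _ "p + q"]) simp
next
  case (pf_mult f g)
  then obtain p q where "\<forall>t. f (L t) = poly p t" "\<forall>t. g (L t) = poly q t" by blast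
  then show ?case by (intro exI[of _ "p * q"]) simp
qed

lemma vanish:
  assumes hV: "\<forall>v\<in>V. \<forall>x0 x1. \<exists>p. \<forall>t. v (L x0 x1 t) = poly p t"
    and L0: "L x0 x1 0 = x0" and L1: "L x0 x1 1 = x1"
    and f: "f \<in> polyfuns V" and g: "g \<in> polyfuns V"
    and gx1: "g x1 \<noteq> 0" and fg: "\<forall>x. g x \<noteq> 0 \<longrightarrow> f x = 0"
  shows "f x0 = (0::complex)"
proof -
  have hV': "\<forall>v\<in>V. \<exists>p. \<forall>t. v (L x0 x1 t) = poly p t" using hV by blast
  obtain pf where pf: "\<forall>t. f (L x0 x1 t) = poly pf t" using pf_line[OF hV' f] by blast
  obtain pg where pg: "\<forall>t. g (L x0 x1 t) = poly pg t" using pf_line[OF hV' g] by blast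
  have "poly pg 1 \<noteq> 0" using pg gx1 L1 by metis
  then have "pg \<noteq> 0" by auto
  then have fin: "finite {t. poly pg t = 0}" by (rule poly_roots_finite)
  have sub: "- {t. poly pg t = 0} \<subseteq> {t. poly pf t = 0}"
  proof
    fix t assume "t \<in> - {t. poly pg t = 0}"
    then have "g (L x0 x1 t) \<noteq> 0" using pg by simp
    then have "f (L x0 x1 t) = 0" using fg by blast
    then show "t \<in> {t. poly pf t = 0}" using pf by simp
  qed
  have "infinite (- {t. poly pg t = 0})"
    using fin infinite_UNIV_char_0[where 'a=complex] by (metis Compl_eq_Diff_UNIV finite_Diff2 finite.emptyI)
  then have "infinite {t. poly pf t = 0}" using sub finite_subset by blast
  then have "pf = 0" using poly_roots_finite by blast
  then have "poly pf 0 = 0" by simp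
  then show ?thesis using pf L0 by metis
qed

lemma ratsub:
  assumes hW: "\<forall>v\<in>W. \<exists>c\<in>polyfuns V. \<exists>d\<in>polyfuns V. \<forall>a. Good a \<longrightarrow> d a \<noteq> 0 \<and> v (\<phi> a) * d a = c a"
  shows "F \<in> polyfuns W \<Longrightarrow> \<exists>H\<in>polyfuns V. \<exists>d\<in>polyfuns V. \<forall>a. Good a \<longrightarrow> d a \<noteq> (0::complex) \<and> F (\<phi> a) * d a = H a"
proof (induction rule: polyfuns.induct)
  case (pf_const c)
  show ?case by (rule bexI[of _ "\<lambda>x. c"], rule bexI[of _ "\<lambda>x. 1"]) (auto intro: polyfuns.intros)
next
  case (pf_var f) then show ?case using hW by blast
next
  case (pf_add f g)
  then obtain Hf df Hg dg where h: "Hf \<in> polyfuns V" "df \<in> polyfuns V" "Hg \<in> polyfuns V" "dg \<in> polyfuns V"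
    "\<forall>a. Good a \<longrightarrow> df a \<noteq> 0 \<and> f (\<phi> a) * df a = Hf a"
    "\<forall>a. Good a \<longrightarrow> dg a \<noteq> 0 \<and> g (\<phi> a) * dg a = Hg a" by blast
  show ?case
  proof (rule bexI[of _ "\<lambda>a. Hf a * dg a + Hg a * df a"], rule bexI[of _ "\<lambda>a. df a * dg a"])
    show "\<forall>a. Good a \<longrightarrow> df a * dg a \<noteq> 0 \<and> (f (\<phi> a) + g (\<phi> a)) * (df a * dg a) = Hf a * dg a + Hg a * df a"
    proof (intro allI impI conjI)
      fix a assume "Good a"
      with h(5,6) have 1: "df a \<noteq> 0" "f (\<phi> a) * df a = Hf a" "dg a \<noteq> 0" "g (\<phi> a) * dg a = Hg a" by auto
      then show "df a * dg a \<noteq> 0" by simp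
      have "(f (\<phi> a) + g (\<phi> a)) * (df a * dg a) = (f (\<phi> a) * df a) * dg a + (g (\<phi> a) * dg a) * df a"
        by (simp add: algebra_simps)
      then show "(f (\<phi> a) + g (\<phi> a)) * (df a * dg a) = Hf a * dg a + Hg a * df a" using 1 by simp
    qed
  qed (use h in \<open>auto intro: polyfuns.intros\<close>)
next
  case (pf_mult f g)
  then obtain Hf df Hg dg where h: "Hf \<in> polyfuns V" "df \<in> polyfuns V" "Hg \<in> polyfuns V" "dg \<in> polyfuns V"
    "\<forall>a. Good a \<longrightarrow> df a \<noteq> 0 \<and> f (\<phi> a) * df a = Hf a"
    "\<forall>a. Good a \<longrightarrow> dg a \<noteq> 0 \<and> g (\<phi> a) * dg a = Hg a" by blast
  show ?case
  proof (rule bexI[of _ "\<lambda>a. Hf a * Hg a"], rule bexI[of _ "\<lambda>a. df a * dg a"])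
    show "\<forall>a. Good a \<longrightarrow> df a * dg a \<noteq> 0 \<and> (f (\<phi> a) * g (\<phi> a)) * (df a * dg a) = Hf a * Hg a"
    proof (intro allI impI conjI)
      fix a assume "Good a"
      with h(5,6) have 1: "df a \<noteq> 0" "f (\<phi> a) * df a = Hf a" "dg a \<noteq> 0" "g (\<phi> a) * dg a = Hg a" by auto
      then show "df a * dg a \<noteq> 0" by simp
      have "(f (\<phi> a) * g (\<phi> a)) * (df a * dg a) = (f (\<phi> a) * df a) * (g (\<phi> a) * dg a)"
        by (simp add: algebra_simps)
      then show "(f (\<phi> a) * g (\<phi> a)) * (df a * dg a) = Hf a * Hg a" using 1 by simp
    qed
  qed (use h in \<open>auto intro: polyfuns.intros\<close>)
qed




lemma sum2: "(\<Sum>a<(2::nat). g a) = g 0 + g 1" by (simp add: numeral_2_eq_2)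
lemma less2: "(a::nat) < 2 \<longleftrightarrow> a = 0 \<or> a = 1" by auto

definition fv :: "nat \<Rightarrow> nat \<Rightarrow> complex" where
  "fv e a = (if a = 0 then 1 else if e = 0 then - \<i> else \<i>)"
definition Xm :: "(nat \<Rightarrow> nat \<Rightarrow> complex) \<Rightarrow> nat \<Rightarrow> nat \<Rightarrow> complex" where
  "Xm m e f = (\<Sum>a<2. \<Sum>b<2. fv (1-e) a * m a b * fv (1-f) b) / 4"
definition Minv :: "(nat \<Rightarrow> nat \<Rightarrow> complex) \<Rightarrow> nat \<Rightarrow> nat \<Rightarrow> complex" where
  "Minv X a b = (\<Sum>e<2. \<Sum>f<2. X e f * fv e a * fv f b)"
definition kap :: "complex \<Rightarrow> complex \<Rightarrow> nat \<Rightarrow> complex" where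
  "kap c s e = (if e = 0 then c + \<i> * s else c - \<i> * s)"

lemma Minv_Xm: "a < 2 \<Longrightarrow> b < 2 \<Longrightarrow> Minv (Xm m) a b = m a b"
  unfolding less2 by (auto simp: Minv_def Xm_def sum2 fv_def field_simps)

lemma Xm_Minv: "e < 2 \<Longrightarrow> f < 2 \<Longrightarrow> Xm (Minv X) e f = X e f"
  unfolding less2 by (auto simp: Minv_def Xm_def sum2 fv_def field_simps)

lemma Xm_rot: "e < 2 \<Longrightarrow> f < 2 \<Longrightarrow>
  Xm (\<lambda>a b. \<Sum>p<2. \<Sum>q<2. rot c s a p * m p q * rot c' s' b q) e f = kap c s e * kap c' s' f * Xm m e f"
  unfolding less2 by (auto simp: rot_def kap_def Xm_def sum2 fv_def field_simps)

definition Xc :: "pt \<Rightarrow> nat \<Rightarrow> nat \<Rightarrow> nat \<Rightarrow> complex" where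
  "Xc x j = Xm (snd x j)"

lemma tq_X: "tq x j = 2*(Xc x j 0 0 * Xc x j 1 1 + Xc x j 0 1 * Xc x j 1 0)"
  by (simp add: tq_def MtM_def Xc_def Xm_def sum2 fv_def field_simps)
lemma delq_X: "delq x j = -4*(Xc x j 0 0 * Xc x j 1 1 - Xc x j 0 1 * Xc x j 1 0)"
  by (simp add: delq_def Xc_def Xm_def sum2 fv_def field_simps)
lemma wplus_X: "wplus x j = 4 * Xc x j 0 1 * Xc x j 1 1"
  by (simp add: wplus_def aq_def bq_def MtM_def Xc_def Xm_def sum2 fv_def field_simps)
lemma wminus_X: "wminus x j = 4 * Xc x j 0 0 * Xc x j 1 0"
  by (simp add: wminus_def aq_def bq_def MtM_def Xc_def Xm_def sum2 fv_def field_simps)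

lemma Xc_act:
  assumes "1 \<le> j" "j \<le> n - 1" "e < 2" "f < 2"
  shows "Xc (W'_act n rc rs x) j e f = kap (rc j) (rs j) e * kap (rc n) (rs n) f * Xc x j e f"
proof -
  have "Xc (W'_act n rc rs x) j e f = Xm (\<lambda>a b. \<Sum>p<2. \<Sum>q<2. rot (rc j) (rs j) a p * snd x j p q * rot (rc n) (rs n) b q) e f"
    using assms(1,2) by (simp add: Xc_def Xm_def W'_act_def sum2)
  also have "\<dots> = kap (rc j) (rs j) e * kap (rc n) (rs n) f * Xc x j e f"
    using Xm_rot[OF assms(3,4)] by (simp add: Xc_def)
  finally show ?thesis .
qed




lemma kap01: "c\<^sup>2 + s\<^sup>2 = 1 \<Longrightarrow> kap c s 0 * kap c s 1 = 1"
  by (simp add: kap_def algebra_simps power2_eq_square)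

lemma m4a: "(a::complex)*c = 1 \<Longrightarrow> b*d = 1 \<Longrightarrow> (a*b*P)*(c*d*U) = P*U"
  by (metis (no_types, lifting) mult.commute mult.left_commute mult_1)
lemma m4b: "(a::complex)*c = 1 \<Longrightarrow> b*d = 1 \<Longrightarrow> (a*d*Q)*(c*b*R) = Q*R"
  by (metis (no_types, lifting) mult.commute mult.left_commute mult_1)

context
  fixes n :: nat and rc rs :: "nat \<Rightarrow> complex"
  assumes n2: "n \<ge> 2" and W: "W'_param n rc rs"
begin

lemma kj: "1 \<le> j \<Longrightarrow> j \<le> n \<Longrightarrow> kap (rc j) (rs j) 0 * kap (rc j) (rs j) 1 = 1"
  using W by (intro kap01) (auto simp: W'_param_def)
lemma kn: "kap (rc n) (rs n) 0 * kap (rc n) (rs n) 1 = 1"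
  using kj[of n] n2 by simp

lemma tq_inv: "1 \<le> j \<Longrightarrow> j \<le> n - 1 \<Longrightarrow> tq (W'_act n rc rs x) j = tq x j"
  unfolding tq_X using kj[of j] kn
  by (simp add: Xc_act m4a m4b)

lemma delq_inv: "1 \<le> j \<Longrightarrow> j \<le> n - 1 \<Longrightarrow> delq (W'_act n rc rs x) j = delq x j"
  unfolding delq_X using kj[of j] kn
  by (simp add: Xc_act m4a m4b)

lemma uq_inv: "1 \<le> j \<Longrightarrow> j \<le> n - 1 \<Longrightarrow> uq (W'_act n rc rs x) 1 j = uq x 1 j"
proof -
  assume j: "1 \<le> j" "j \<le> n - 1"
  have 1: "1 \<le> n - 1" using n2 by simp
  define a where "a = kap (rc 1) (rs 1) 0"
  define b where "b = kap (rc 1) (rs 1) 1"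
  define c where "c = kap (rc j) (rs j) 0"
  define d where "d = kap (rc j) (rs j) 1"
  define K0 where "K0 = kap (rc n) (rs n) 0"
  define K1 where "K1 = kap (rc n) (rs n) 1"
  have ab: "a * b = 1" using kj[of 1] n2 by (simp add: a_def b_def)
  have cd: "c * d = 1" using kj[of j] j by (simp add: c_def d_def)
  have K: "K0 * K1 = 1" using kn by (simp add: K0_def K1_def)
  have "uq (W'_act n rc rs x) 1 j = 4 * (4 * (a*K1*Xc x 1 0 1) * (b*K1*Xc x 1 1 1)) * (4 * (c*K0*Xc x j 0 0) * (d*K0*Xc x j 1 0))"
    unfolding uq_def wplus_X wminus_X using j 1
    by (simp add: Xc_act a_def b_def c_def d_def K0_def K1_def)
  also have "\<dots> = (a*b) * (c*d) * (K0*K1)^2 * (4 * (4 * Xc x 1 0 1 * Xc x 1 1 1) * (4 * Xc x j 0 0 * Xc x j 1 0))"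
    by (simp add: algebra_simps power2_eq_square)
  also have "\<dots> = uq x 1 j" using ab cd K by (simp add: uq_def wplus_X wminus_X)
  finally show ?thesis .
qed

lemma utq_inv: "2 \<le> j \<Longrightarrow> j \<le> n - 1 \<Longrightarrow> utq (W'_act n rc rs x) j = utq x j"
  using n2 uq_inv[of j x] by (simp add: utq_def tq_inv delq_inv)

lemma gens_inv: "gens n (W'_act n rc rs x) = gens n x"
proof
  fix k
  show "gens n (W'_act n rc rs x) k = gens n x k"
  proof -
    have f: "fst (W'_act n rc rs x) = fst x" by (simp add: W'_act_def)
    have t: "k < n-1 \<Longrightarrow> tq (W'_act n rc rs x) (k+1) = tq x (k+1)" by (rule tq_inv) auto
    have d: "\<not> k < n-1 \<Longrightarrow> k < 2*n-2 \<Longrightarrow> delq (W'_act n rc rs x) (k - (n - 1) + 1) = delq x (k - (n - 1) + 1)"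
      by (rule delq_inv) auto
    have u: "\<not> k < 2*n-2 \<Longrightarrow> k < 3*n-4 \<Longrightarrow> utq (W'_act n rc rs x) (k - (2*n - 2) + 2) = utq x (k - (2*n - 2) + 2)"
      by (rule utq_inv) auto
    show ?thesis unfolding gens_def using t d u f by simp
  qed
qed

lemma BigDelta_inv: "BigDelta n (W'_act n rc rs x) = BigDelta n x"
  unfolding BigDelta_def by (rule prod.cong) (auto simp: tq_inv delq_inv)

end

lemma part1: "n \<ge> 2 \<Longrightarrow> (\<forall>rc rs x. W'_param n rc rs \<and> BigDelta n x \<noteq> 0 \<longrightarrow>
        BigDelta n (W'_act n rc rs x) \<noteq> 0 \<and> gens n (W'_act n rc rs x) = gens n x)"
  using BigDelta_inv gens_inv by auto




lemma XT_fst: "1 \<le> i \<Longrightarrow> i \<le> n \<Longrightarrow> (\<lambda>x. fst x i) \<in> polyfuns (XT_coords n)"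
  by (rule pf_var) (auto simp: XT_coords_def)
lemma XT_snd: "1 \<le> j \<Longrightarrow> j \<le> n - 1 \<Longrightarrow> a < 2 \<Longrightarrow> b < 2 \<Longrightarrow> (\<lambda>x. snd x j a b) \<in> polyfuns (XT_coords n)"
  by (rule pf_var) (auto simp: XT_coords_def)
lemma Y_c: "k < m \<Longrightarrow> (\<lambda>y. y k) \<in> polyfuns (Y_coords m)"
  by (rule pf_var) (auto simp: Y_coords_def)

lemma Xc_pf: "1 \<le> j \<Longrightarrow> j \<le> n - 1 \<Longrightarrow> (\<lambda>x. Xc x j e f) \<in> polyfuns (XT_coords n)"
  unfolding Xc_def Xm_def sum2
  by (intro pf_divc pf_add pf_mult pf_const XT_snd) auto

lemma tq_pf: "1 \<le> j \<Longrightarrow> j \<le> n - 1 \<Longrightarrow> (\<lambda>x. tq x j) \<in> polyfuns (XT_coords n)"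
  unfolding tq_X by (intro pf_add pf_mult pf_const Xc_pf)
lemma delq_pf: "1 \<le> j \<Longrightarrow> j \<le> n - 1 \<Longrightarrow> (\<lambda>x. delq x j) \<in> polyfuns (XT_coords n)"
  unfolding delq_X by (intro pf_sub pf_mult pf_const Xc_pf)
lemma uq_pf: "1 \<le> j \<Longrightarrow> j \<le> n - 1 \<Longrightarrow> 1 \<le> n - 1 \<Longrightarrow> (\<lambda>x. uq x 1 j) \<in> polyfuns (XT_coords n)"
  unfolding uq_def wplus_X wminus_X by (intro pf_mult pf_const Xc_pf) auto
lemma E1_pf: "1 \<le> n - 1 \<Longrightarrow> (\<lambda>x. (delq x 1)\<^sup>2 - (tq x 1)\<^sup>2) \<in> polyfuns (XT_coords n)"
  by (intro pf_sub pf_pow delq_pf tq_pf) auto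
lemma BigDelta_pf: "BigDelta n \<in> polyfuns (XT_coords n)"
proof -
  have "(\<lambda>x. \<Prod>i\<in>{1..n - 1}. delq x i * ((delq x i)\<^sup>2 - (tq x i)\<^sup>2)) \<in> polyfuns (XT_coords n)"
    by (intro pf_prod pf_mult pf_sub pf_pow delq_pf tq_pf) auto
  then show ?thesis by (simp add: BigDelta_def[abs_def])
qed

definition agree :: "nat \<Rightarrow> pt \<Rightarrow> pt \<Rightarrow> bool" where
  "agree n x x' \<longleftrightarrow> (\<forall>i. 1 \<le> i \<and> i \<le> n \<longrightarrow> fst x i = fst x' i) \<and>
     (\<forall>j a b. 1 \<le> j \<and> j \<le> n - 1 \<and> a < 2 \<and> b < 2 \<longrightarrow> snd x j a b = snd x' j a b)"

lemma agree_pf: "f \<in> polyfuns (XT_coords n) \<Longrightarrow> agree n x x' \<Longrightarrow> f x = f x'"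
  by (induction rule: polyfuns.induct) (auto simp: XT_coords_def agree_def)

lemma agreeY_pf: "f \<in> polyfuns (Y_coords m) \<Longrightarrow> (\<forall>k<m. y k = y' k) \<Longrightarrow> f y = f y'"
  by (induction rule: polyfuns.induct) (auto simp: Y_coords_def)

lemma agree_sym: "agree n x x' \<Longrightarrow> agree n x' x"
  by (auto simp: agree_def)
lemma agree_trans: "agree n x x' \<Longrightarrow> agree n x' x'' \<Longrightarrow> agree n x x''"
  by (auto simp: agree_def)

lemma agree_Xc:
  assumes "\<forall>i. 1 \<le> i \<and> i \<le> n \<longrightarrow> fst x i = fst x' i"
    and "\<forall>j e f. 1 \<le> j \<and> j \<le> n - 1 \<and> e < 2 \<and> f < 2 \<longrightarrow> Xc x j e f = Xc x' j e f"
  shows "agree n x x'"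
  unfolding agree_def
proof (intro conjI allI impI)
  fix i assume "1 \<le> i \<and> i \<le> n" then show "fst x i = fst x' i" using assms(1) by blast
next
  fix j a b :: nat assume h: "1 \<le> j \<and> j \<le> n - 1 \<and> a < 2 \<and> b < 2"
  have "snd x j a b = Minv (Xc x j) a b" using h Minv_Xm by (simp add: Xc_def)
  also have "\<dots> = Minv (Xc x' j) a b" using h assms(2) by (simp add: Minv_def sum2)
  also have "\<dots> = snd x' j a b" using h Minv_Xm by (simp add: Xc_def)
  finally show "snd x j a b = snd x' j a b" .
qed

definition Lpt :: "pt \<Rightarrow> pt \<Rightarrow> complex \<Rightarrow> pt" where
  "Lpt x0 x1 t = (\<lambda>i. fst x0 i + t * (fst x1 i - fst x0 i), \<lambda>j a b. snd x0 j a b + t * (snd x1 j a b - snd x0 j a b))"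
definition LY :: "(nat \<Rightarrow> complex) \<Rightarrow> (nat \<Rightarrow> complex) \<Rightarrow> complex \<Rightarrow> nat \<Rightarrow> complex" where
  "LY y0 y1 t = (\<lambda>k. y0 k + t * (y1 k - y0 k))"

lemma lineXT: "\<forall>v\<in>XT_coords n. \<forall>x0 x1. \<exists>p. \<forall>t. v (Lpt x0 x1 t) = poly p t"
proof (intro ballI allI)
  fix v x0 x1 assume "v \<in> XT_coords n"
  then consider i where "v = (\<lambda>x. fst x i)" | j a b where "v = (\<lambda>x. snd x j a b)"
    unfolding XT_coords_def by blast
  then show "\<exists>p. \<forall>t. v (Lpt x0 x1 t) = poly p t"
  proof cases
    case 1 then show ?thesis
      by (intro exI[of _ "[:fst x0 i, fst x1 i - fst x0 i:]"]) (simp add: Lpt_def algebra_simps)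
  next
    case 2 then show ?thesis
      by (intro exI[of _ "[:snd x0 j a b, snd x1 j a b - snd x0 j a b:]"]) (simp add: Lpt_def algebra_simps)
  qed
qed

lemma lineY: "\<forall>v\<in>Y_coords m. \<forall>x0 x1. \<exists>p. \<forall>t. v (LY x0 x1 t) = poly p t"
proof (intro ballI allI)
  fix v x0 x1 assume "v \<in> Y_coords m"
  then obtain k where "v = (\<lambda>y. y k)" unfolding Y_coords_def by blast
  then show "\<exists>p. \<forall>t. v (LY x0 x1 t) = poly p t"
    by (intro exI[of _ "[:x0 k, x1 k - x0 k:]"]) (simp add: LY_def algebra_simps)
qed

lemma vanishXT:
  assumes "f \<in> polyfuns (XT_coords n)" "g \<in> polyfuns (XT_coords n)" "g x1 \<noteq> 0" "\<forall>x. g x \<noteq> 0 \<longrightarrow> f x = 0"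
  shows "f x0 = 0"
  by (rule vanish[OF lineXT _ _ assms, of x0]) (auto simp: Lpt_def)

lemma vanishY:
  assumes "f \<in> polyfuns (Y_coords m)" "g \<in> polyfuns (Y_coords m)" "g x1 \<noteq> 0" "\<forall>x. g x \<noteq> 0 \<longrightarrow> f x = 0"
  shows "f x0 = 0"
  by (rule vanish[OF lineY _ _ assms, of x0]) (auto simp: LY_def)

lemma both_nz:
  assumes "f \<in> polyfuns (XT_coords n)" "g \<in> polyfuns (XT_coords n)" "f x0 \<noteq> 0" "g x1 \<noteq> 0"
  shows "\<exists>x. f x \<noteq> 0 \<and> g x \<noteq> 0"
  using vanishXT[OF assms(1,2,4)] assms(3) by blast




definition lc :: "complex \<Rightarrow> complex" where "lc l = (l + 1/l)/2"
definition ls :: "complex \<Rightarrow> complex" where "ls l = (l - 1/l)/(2*\<i>)"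
definition kL :: "complex \<Rightarrow> nat \<Rightarrow> complex" where "kL l e = (if e = 0 then l else 1/l)"
definition actL :: "nat \<Rightarrow> (nat \<Rightarrow> complex) \<Rightarrow> pt \<Rightarrow> pt" where
  "actL n L x = W'_act n (\<lambda>i. lc (L i)) (\<lambda>i. ls (L i)) x"

lemma kap_lc: "kap (lc l) (ls l) e = kL l e"
  by (auto simp: kap_def lc_def ls_def kL_def field_simps)

lemma lc_ls: "l \<noteq> 0 \<Longrightarrow> (lc l)\<^sup>2 + (ls l)\<^sup>2 = 1"
  by (simp add: lc_def ls_def field_simps power2_eq_square)

lemma W'_param_L: "(\<forall>i. 1 \<le> i \<and> i \<le> n \<longrightarrow> L i \<noteq> 0) \<Longrightarrow> W'_param n (\<lambda>i. lc (L i)) (\<lambda>i. ls (L i))"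
  by (auto simp: W'_param_def lc_ls)

lemma fst_actL: "fst (actL n L x) = fst x"
  by (simp add: actL_def W'_act_def)

lemma Xc_actL: "1 \<le> j \<Longrightarrow> j \<le> n - 1 \<Longrightarrow> e < 2 \<Longrightarrow> f < 2 \<Longrightarrow>
   Xc (actL n L x) j e f = kL (L j) e * kL (L n) f * Xc x j e f"
  unfolding actL_def by (simp add: Xc_act kap_lc)

lemma kL_mult: "kL (a * b) e = kL a e * kL b e"
  by (simp add: kL_def)

lemma agree_comp:
  assumes "\<forall>i. 1 \<le> i \<and> i \<le> n \<longrightarrow> L i = L1 i * L2 i" "n \<ge> 2"
  shows "agree n (actL n L1 (actL n L2 z)) (actL n L z)"
proof (rule agree_Xc)
  show "\<forall>i. 1 \<le> i \<and> i \<le> n \<longrightarrow> fst (actL n L1 (actL n L2 z)) i = fst (actL n L z) i"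
    by (simp add: fst_actL)
  show "\<forall>j e f. 1 \<le> j \<and> j \<le> n - 1 \<and> e < 2 \<and> f < 2 \<longrightarrow> Xc (actL n L1 (actL n L2 z)) j e f = Xc (actL n L z) j e f"
  proof (intro allI impI)
    fix j e f :: nat assume h: "1 \<le> j \<and> j \<le> n - 1 \<and> e < 2 \<and> f < 2"
    have "L j = L1 j * L2 j" "L n = L1 n * L2 n" using assms h by auto
    then show "Xc (actL n L1 (actL n L2 z)) j e f = Xc (actL n L z) j e f"
      using h by (simp add: Xc_actL kL_mult)
  qed
qed

definition yt :: "nat \<Rightarrow> (nat \<Rightarrow> complex) \<Rightarrow> nat \<Rightarrow> complex" where "yt n y j = y (j - 1)"
definition yd :: "nat \<Rightarrow> (nat \<Rightarrow> complex) \<Rightarrow> nat \<Rightarrow> complex" where "yd n y j = y (n - 2 + j)"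
definition yu :: "nat \<Rightarrow> (nat \<Rightarrow> complex) \<Rightarrow> nat \<Rightarrow> complex" where "yu n y j = y (2 * n - 4 + j)"
definition ya :: "nat \<Rightarrow> (nat \<Rightarrow> complex) \<Rightarrow> nat \<Rightarrow> complex" where "ya n y i = y (3 * n - 5 + i)"
definition yA :: "nat \<Rightarrow> (nat \<Rightarrow> complex) \<Rightarrow> nat \<Rightarrow> complex" where "yA n y j = yt n y j / 4 - yd n y j / 8"
definition yB :: "nat \<Rightarrow> (nat \<Rightarrow> complex) \<Rightarrow> nat \<Rightarrow> complex" where "yB n y j = yt n y j / 4 + yd n y j / 8"
definition yE :: "nat \<Rightarrow> (nat \<Rightarrow> complex) \<Rightarrow> complex" where "yE n y = (yd n y 1)\<^sup>2 - (yt n y 1)\<^sup>2"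
definition dj :: "nat \<Rightarrow> (nat \<Rightarrow> complex) \<Rightarrow> nat \<Rightarrow> complex" where
  "dj n y j = (if j = 1 then 1 else yu n y j * yE n y * yA n y 1)"
definition Xsd :: "nat \<Rightarrow> (nat \<Rightarrow> complex) \<Rightarrow> nat \<Rightarrow> nat \<Rightarrow> nat \<Rightarrow> complex" where
  "Xsd n y j e f = (if e = 0 \<and> f = 0 then dj n y j
     else if e = 1 \<and> f = 1 then yA n y j * dj n y j
     else if e = 0 then (if j = 1 then 1 else 64 * (yA n y 1)\<^sup>2 * yB n y j)
     else (if j = 1 then yB n y 1 else (yu n y j * yE n y)\<^sup>2 / 64))"
definition Xs :: "nat \<Rightarrow> (nat \<Rightarrow> complex) \<Rightarrow> nat \<Rightarrow> nat \<Rightarrow> nat \<Rightarrow> complex" where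
  "Xs n y j e f = Xsd n y j e f / dj n y j"
definition sl :: "nat \<Rightarrow> (nat \<Rightarrow> complex) \<Rightarrow> pt" where
  "sl n y = (\<lambda>i. ya n y i, \<lambda>j a b. Minv (Xs n y j) a b)"
definition Good :: "nat \<Rightarrow> (nat \<Rightarrow> complex) \<Rightarrow> bool" where
  "Good n y \<longleftrightarrow> yA n y 1 \<noteq> 0 \<and> yE n y \<noteq> 0 \<and> (\<forall>j. 2 \<le> j \<and> j \<le> n - 1 \<longrightarrow> yu n y j \<noteq> 0)"

lemma Xc_sl: "e < 2 \<Longrightarrow> f < 2 \<Longrightarrow> Xc (sl n y) j e f = Xs n y j e f"
  by (simp add: Xc_def sl_def Xm_Minv)

lemma dj_nz: "Good n y \<Longrightarrow> 1 \<le> j \<Longrightarrow> j \<le> n - 1 \<Longrightarrow> dj n y j \<noteq> 0"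
  by (auto simp: Good_def dj_def)

lemma sl_AB:
  assumes "Good n y" "1 \<le> j" "j \<le> n - 1"
  shows "Xs n y j 0 0 * Xs n y j 1 1 = yA n y j" "Xs n y j 0 1 * Xs n y j 1 0 = yB n y j"
proof -
  have d: "dj n y j \<noteq> 0" using dj_nz assms by blast
  show "Xs n y j 0 0 * Xs n y j 1 1 = yA n y j" using d by (simp add: Xs_def Xsd_def)
  show "Xs n y j 0 1 * Xs n y j 1 0 = yB n y j"
  proof (cases "j = 1")
    case True then show ?thesis by (simp add: Xs_def Xsd_def dj_def)
  next
    case False
    then have "yu n y j \<noteq> 0" using assms by (auto simp: Good_def)
    then show ?thesis using False assms(1) d
      by (simp add: Xs_def Xsd_def dj_def Good_def field_simps power2_eq_square)
  qed
qed

lemma tq_sl: assumes "Good n y" "1 \<le> j" "j \<le> n - 1" shows "tq (sl n y) j = yt n y j"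
proof -
  have "tq (sl n y) j = 2 * (yA n y j + yB n y j)" unfolding tq_X using sl_AB[OF assms] by (simp add: Xc_sl)
  then show ?thesis by (simp add: yA_def yB_def field_simps)
qed
lemma delq_sl: assumes "Good n y" "1 \<le> j" "j \<le> n - 1" shows "delq (sl n y) j = yd n y j"
proof -
  have "delq (sl n y) j = -4 * (yA n y j - yB n y j)" unfolding delq_X using sl_AB[OF assms] by (simp add: Xc_sl)
  then show ?thesis by (simp add: yA_def yB_def field_simps)
qed
lemma utq_sl:
  assumes "Good n y" "2 \<le> j" "j \<le> n - 1"
  shows "utq (sl n y) j = yu n y j"
proof -
  have 1: "1 \<le> n - 1" using assms by simp
  have E: "(delq (sl n y) 1)\<^sup>2 - (tq (sl n y) 1)\<^sup>2 = yE n y"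
    using assms 1 by (simp add: tq_sl delq_sl yE_def)
  have g: "yA n y 1 \<noteq> 0" "yE n y \<noteq> 0" "yu n y j \<noteq> 0" using assms by (auto simp: Good_def)
  show ?thesis unfolding utq_def E uq_def wplus_X wminus_X using assms g
    by (simp add: Xc_sl Xs_def Xsd_def dj_def field_simps power2_eq_square)
qed




lemma gens_t: "k < n-1 \<Longrightarrow> gens n x k = tq x (k+1)" by (simp add: gens_def)
lemma gens_d: "n-1 \<le> k \<Longrightarrow> k < 2*n-2 \<Longrightarrow> gens n x k = delq x (k-(n-1)+1)" by (simp add: gens_def)
lemma gens_u: assumes "2*n-2 \<le> k" "k < 3*n-4" shows "gens n x k = utq x (k-(2*n-2)+2)"
proof -
  have h: "\<not> k < n-1" "\<not> k < 2*n-2" "k < 3*n-4" using assms by arith+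
  show ?thesis by (simp only: gens_def if_not_P[OF h(1)] if_not_P[OF h(2)] if_P[OF h(3)])
qed
lemma gens_a: assumes "n \<ge> 2" "3*n-4 \<le> k" "k < 4*n-4" shows "gens n x k = fst x (k-(3*n-4)+1)"
proof -
  have h: "\<not> k < n-1" "\<not> k < 2*n-2" "\<not> k < 3*n-4" "k < 4*n-4" using assms by arith+
  show ?thesis by (simp only: gens_def if_not_P[OF h(1)] if_not_P[OF h(2)] if_not_P[OF h(3)] if_P[OF h(4)])
qed

lemma gens_sl:
  assumes n2: "n \<ge> 2" and G: "Good n y" and k: "k < 4 * n - 4"
  shows "gens n (sl n y) k = y k"
proof -
  consider "k < n-1" | "n-1 \<le> k" "k < 2*n-2" | "2*n-2 \<le> k" "k < 3*n-4" | "3*n-4 \<le> k" by arith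
  then show ?thesis
  proof cases
    case 1
    have "tq (sl n y) (k+1) = yt n y (k+1)" using 1 by (intro tq_sl[OF G]) auto
    then show ?thesis using gens_t[OF 1] by (simp add: yt_def)
  next
    case 2
    have e: "n - 2 + (k-(n-1)+1) = k" using 2 n2 by arith
    have "delq (sl n y) (k-(n-1)+1) = yd n y (k-(n-1)+1)" using 2 by (intro delq_sl[OF G]) auto
    then show ?thesis using gens_d[OF 2] unfolding yd_def e by simp
  next
    case 3
    have e: "2 * n - 4 + (k-(2*n-2)+2) = k" using 3 n2 by arith
    have "utq (sl n y) (k-(2*n-2)+2) = yu n y (k-(2*n-2)+2)" using 3 by (intro utq_sl[OF G]) auto
    then show ?thesis using gens_u[OF 3] unfolding yu_def e by simp
  next
    case 4
    have e: "3 * n - 5 + (k-(3*n-4)+1) = k" using 4 n2 by arith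
    have "gens n (sl n y) k = fst (sl n y) (k-(3*n-4)+1)" by (rule gens_a[OF n2 4 k])
    also have "\<dots> = ya n y (k-(3*n-4)+1)" by (simp add: sl_def)
    also have "\<dots> = y k" unfolding ya_def e by (rule refl)
    finally show ?thesis .
  qed
qed

lemma BigDelta_sl:
  assumes "Good n y"
  shows "BigDelta n (sl n y) = (\<Prod>j\<in>{1..n-1}. yd n y j * ((yd n y j)\<^sup>2 - (yt n y j)\<^sup>2))"
  unfolding BigDelta_def by (rule prod.cong) (auto simp: tq_sl[OF assms] delq_sl[OF assms])

lemma gt: "n \<ge> 2 \<Longrightarrow> 1 \<le> j \<Longrightarrow> j \<le> n - 1 \<Longrightarrow> yt n (gens n x) j = tq x j"
  by (simp add: yt_def gens_def)
lemma gd: assumes "n \<ge> 2" "1 \<le> j" "j \<le> n - 1" shows "yd n (gens n x) j = delq x j"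
proof -
  have e: "n-2+j-(n-1)+1 = j" using assms by arith
  have "gens n x (n-2+j) = delq x (n-2+j-(n-1)+1)" by (rule gens_d) (use assms in arith)+
  then show ?thesis unfolding yd_def e .
qed
lemma gu: assumes "n \<ge> 2" "2 \<le> j" "j \<le> n - 1" shows "yu n (gens n x) j = utq x j"
proof -
  have e: "2*n-4+j-(2*n-2)+2 = j" using assms by arith
  have "gens n x (2*n-4+j) = utq x (2*n-4+j-(2*n-2)+2)" by (rule gens_u) (use assms in arith)+
  then show ?thesis unfolding yu_def e .
qed
lemma ga: assumes "n \<ge> 2" "1 \<le> i" "i \<le> n" shows "ya n (gens n x) i = fst x i"
proof -
  have e: "3*n-5+i-(3*n-4)+1 = i" using assms by arith
  have "gens n x (3*n-5+i) = fst x (3*n-5+i-(3*n-4)+1)" by (rule gens_a) (use assms in arith)+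
  then show ?thesis unfolding ya_def e .
qed

lemma gA: "n \<ge> 2 \<Longrightarrow> 1 \<le> j \<Longrightarrow> j \<le> n - 1 \<Longrightarrow> yA n (gens n x) j = Xc x j 0 0 * Xc x j 1 1"
  by (simp add: yA_def gt gd tq_X delq_X field_simps)
lemma gB: "n \<ge> 2 \<Longrightarrow> 1 \<le> j \<Longrightarrow> j \<le> n - 1 \<Longrightarrow> yB n (gens n x) j = Xc x j 0 1 * Xc x j 1 0"
  by (simp add: yB_def gt gd tq_X delq_X field_simps)
lemma gE: "n \<ge> 2 \<Longrightarrow> yE n (gens n x) = (delq x 1)\<^sup>2 - (tq x 1)\<^sup>2"
  by (simp add: yE_def gt gd)

definition GX :: "nat \<Rightarrow> pt \<Rightarrow> complex" where
  "GX n x = BigDelta n x * (\<Prod>j\<in>{1..n-1}. \<Prod>e<2. \<Prod>f<2. Xc x j e f)"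

lemma GX_pf: "GX n \<in> polyfuns (XT_coords n)"
proof -
  have "(\<lambda>x. BigDelta n x * (\<Prod>j\<in>{1..n-1}. \<Prod>e<2. \<Prod>f<2. Xc x j e f)) \<in> polyfuns (XT_coords n)"
    by (intro pf_mult pf_prod Xc_pf BigDelta_pf) auto
  then show ?thesis by (simp add: GX_def[abs_def])
qed

lemma GX_nz:
  assumes "GX n x \<noteq> 0"
  shows "BigDelta n x \<noteq> 0" "1 \<le> j \<Longrightarrow> j \<le> n - 1 \<Longrightarrow> e < 2 \<Longrightarrow> f < 2 \<Longrightarrow> Xc x j e f \<noteq> 0"
  using assms by (auto simp: GX_def)

lemma BD_nz:
  assumes "BigDelta n x \<noteq> 0" "1 \<le> j" "j \<le> n - 1"
  shows "delq x j \<noteq> 0" "(delq x j)\<^sup>2 - (tq x j)\<^sup>2 \<noteq> 0"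
  using assms by (auto simp: BigDelta_def)

lemma Good_gens:
  assumes n2: "n \<ge> 2" and G: "GX n x \<noteq> 0"
  shows "Good n (gens n x)"
proof -
  have 1: "1 \<le> n - 1" using n2 by simp
  have E: "(delq x 1)\<^sup>2 - (tq x 1)\<^sup>2 \<noteq> 0" using BD_nz(2)[OF GX_nz(1)[OF G] _ 1] by simp
  have nz: "\<And>j e f. 1 \<le> j \<Longrightarrow> j \<le> n - 1 \<Longrightarrow> e < 2 \<Longrightarrow> f < 2 \<Longrightarrow> Xc x j e f \<noteq> 0"
    using GX_nz(2)[OF G] by blast
  show ?thesis unfolding Good_def
  proof (intro conjI allI impI)
    show "yA n (gens n x) 1 \<noteq> 0" using gA[OF n2 _ 1] nz[OF _ 1] by simp
    show "yE n (gens n x) \<noteq> 0" using gE[OF n2] E by simp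
    fix j assume j: "2 \<le> j \<and> j \<le> n - 1"
    show "yu n (gens n x) j \<noteq> 0"
      using gu[OF n2] j E nz[OF _ 1] nz[of j] by (simp add: utq_def uq_def wplus_X wminus_X)
  qed
qed




lemma alg_j2:
  fixes Pa Qa Ua Pb Qb Rb Ub E l u d :: complex
  assumes nz: "Pa \<noteq> 0" "Qa \<noteq> 0" "Ua \<noteq> 0" "Pb \<noteq> 0" "Rb \<noteq> 0" "E \<noteq> 0" "l \<noteq> 0"
    and l2: "l^2 = Pa/Qa" and u: "u = 4*(4*Qa*Ua)*(4*Pb*Rb)/E" and d: "d = u*E*(Pa*Ua)"
  shows "(Pb/l)*l*(d/d) = Pb" "(1/(Pb/l))*(1/l)*((Pb*Ub)*d/d) = Ub"
    "(Pb/l)*(1/l)*(64*(Pa*Ua)^2*(Qb*Rb)/d) = Qb" "(1/(Pb/l))*l*(((u*E)^2/64)/d) = Rb"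
proof -
  have uE: "u * E = 64*Qa*Ua*Pb*Rb" using u nz by (simp add: field_simps)
  have dnz: "d \<noteq> 0" using d uE nz by simp
  have ll: "l * l = Pa/Qa" using l2 by (simp add: power2_eq_square)
  show "(Pb/l)*l*(d/d) = Pb" using nz dnz by simp
  show "(1/(Pb/l))*(1/l)*((Pb*Ub)*d/d) = Ub" using nz dnz by (simp add: field_simps)
  have d2: "d = 64*Qa*Ua*Pb*Rb*(Pa*Ua)" using d uE by simp
  have m1: "(Pb/l)*(1/l) = Pb/(Pa/Qa)" by (simp add: ll[symmetric])
  have m2: "(1/(Pb/l))*l = (Pa/Qa)/Pb" by (simp add: ll[symmetric])
  have "(Pb/l)*(1/l)*(64*(Pa*Ua)^2*(Qb*Rb)/d) = Pb/(Pa/Qa)*(64*(Pa*Ua)^2*(Qb*Rb)/(64*Qa*Ua*Pb*Rb*(Pa*Ua)))"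
    unfolding m1 d2 ..
  also have "\<dots> = Qb" using nz by (simp add: field_simps power2_eq_square)
  finally show "(Pb/l)*(1/l)*(64*(Pa*Ua)^2*(Qb*Rb)/d) = Qb" .
  have "(1/(Pb/l))*l*(((u*E)^2/64)/d) = (Pa/Qa)/Pb*((64*Qa*Ua*Pb*Rb)^2/64/(64*Qa*Ua*Pb*Rb*(Pa*Ua)))"
    unfolding m2 d2 uE ..
  also have "\<dots> = Rb" using nz by (simp add: field_simps power2_eq_square)
  finally show "(1/(Pb/l))*l*(((u*E)^2/64)/d) = Rb" .
qed

lemma alg_j1:
  fixes Pa Qa Ra Ua l :: complex
  assumes nz: "Pa \<noteq> 0" "Qa \<noteq> 0" "l \<noteq> 0" and l2: "l^2 = Pa/Qa"
  shows "(Pa/l)*l*(1/1) = Pa" "(1/(Pa/l))*(1/l)*((Pa*Ua)*1/1) = Ua"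
    "(Pa/l)*(1/l)*(1/1) = Qa" "(1/(Pa/l))*l*((Qa*Ra)/1) = Ra"
proof -
  have ll: "l * l = Pa/Qa" using l2 by (simp add: power2_eq_square)
  show "(Pa/l)*l*(1/1) = Pa" using nz by simp
  show "(1/(Pa/l))*(1/l)*((Pa*Ua)*1/1) = Ua" using nz by (simp add: field_simps)
  have "(Pa/l)*(1/l)*(1/1) = Pa/(l*l)" by (simp add: field_simps)
  then show "(Pa/l)*(1/l)*(1/1) = Qa" unfolding ll using nz by simp
  have "(1/(Pa/l))*l*((Qa*Ra)/1) = (l*l)/Pa*(Qa*Ra)" using nz by (simp add: field_simps)
  then show "(1/(Pa/l))*l*((Qa*Ra)/1) = Ra" unfolding ll using nz by (simp add: field_simps)
qed

lemma S1:
  assumes n2: "n \<ge> 2" and G: "GX n x \<noteq> 0"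
  shows "\<exists>L. (\<forall>i. 1 \<le> i \<and> i \<le> n \<longrightarrow> L i \<noteq> 0) \<and> agree n (actL n L (sl n (gens n x))) x"
proof -
  define y where "y = gens n x"
  have one: "1 \<le> n - 1" using n2 by simp
  have nz: "\<And>j e f. 1 \<le> j \<Longrightarrow> j \<le> n - 1 \<Longrightarrow> e < 2 \<Longrightarrow> f < 2 \<Longrightarrow> Xc x j e f \<noteq> 0"
    using GX_nz(2)[OF G] by blast
  define E where "E = (delq x 1)\<^sup>2 - (tq x 1)\<^sup>2"
  have Enz: "E \<noteq> 0" using BD_nz(2)[OF GX_nz(1)[OF G] _ one] by (simp add: E_def)
  define l where "l = csqrt (Xc x 1 0 0 / Xc x 1 0 1)"
  have l2: "l^2 = Xc x 1 0 0 / Xc x 1 0 1" by (simp add: l_def)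
  have lnz: "l \<noteq> 0" using l2 nz[OF _ one, of 0 0] nz[OF _ one, of 0 1] by auto
  define L where "L i = (if i = n then l else Xc x i 0 0 / l)" for i
  have Lnz: "\<forall>i. 1 \<le> i \<and> i \<le> n \<longrightarrow> L i \<noteq> 0"
  proof (intro allI impI)
    fix i assume i: "1 \<le> i \<and> i \<le> n"
    show "L i \<noteq> 0"
    proof (cases "i = n")
      case True then show ?thesis using lnz by (simp add: L_def)
    next
      case False
      then have "i \<le> n - 1" using i by arith
      then show ?thesis using lnz nz[of i 0 0] i False by (simp add: L_def)
    qed
  qed
  have ag: "agree n (actL n L (sl n y)) x"
  proof (rule agree_Xc)
    show "\<forall>i. 1 \<le> i \<and> i \<le> n \<longrightarrow> fst (actL n L (sl n y)) i = fst x i"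
      using ga[OF n2] by (simp add: fst_actL sl_def y_def)
    show "\<forall>j e f. 1 \<le> j \<and> j \<le> n - 1 \<and> e < 2 \<and> f < 2 \<longrightarrow> Xc (actL n L (sl n y)) j e f = Xc x j e f"
    proof (intro allI impI)
      fix j e f :: nat assume h: "1 \<le> j \<and> j \<le> n - 1 \<and> e < 2 \<and> f < 2"
      then have j: "1 \<le> j" "j \<le> n - 1" and ef: "e < 2" "f < 2" by auto
      have "j \<noteq> n" using j n2 by arith
      then have Lj: "L j = Xc x j 0 0 / l" by (simp add: L_def)
      have Ln: "L n = l" by (simp add: L_def)
      have X: "\<And>e f. e < 2 \<Longrightarrow> f < 2 \<Longrightarrow> Xc (actL n L (sl n y)) j e f = kL (Xc x j 0 0 / l) e * kL l f * Xs n y j e f"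
        using Xc_actL[OF j] Xc_sl Lj Ln by simp
      have X00: "Xc (actL n L (sl n y)) j 0 0 = kL (Xc x j 0 0 / l) 0 * kL l 0 * Xs n y j 0 0" by (rule X) simp_all
      have X01: "Xc (actL n L (sl n y)) j 0 1 = kL (Xc x j 0 0 / l) 0 * kL l 1 * Xs n y j 0 1" by (rule X) simp_all
      have X10: "Xc (actL n L (sl n y)) j 1 0 = kL (Xc x j 0 0 / l) 1 * kL l 0 * Xs n y j 1 0" by (rule X) simp_all
      have X11: "Xc (actL n L (sl n y)) j 1 1 = kL (Xc x j 0 0 / l) 1 * kL l 1 * Xs n y j 1 1" by (rule X) simp_all
      have k0: "\<And>a. kL a 0 = a" and k1: "\<And>a. kL a 1 = 1 / a" by (simp_all add: kL_def)
      have hA1: "yA n y 1 = Xc x 1 0 0 * Xc x 1 1 1" using gA[OF n2 _ one] by (simp add: y_def)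
      have hAj: "yA n y j = Xc x j 0 0 * Xc x j 1 1" using gA[OF n2 j] by (simp add: y_def)
      have hBj: "yB n y j = Xc x j 0 1 * Xc x j 1 0" using gB[OF n2 j] by (simp add: y_def)
      have hE: "yE n y = E" using gE[OF n2] by (simp add: y_def E_def)
      have nz1: "Xc x 1 0 0 \<noteq> 0" "Xc x 1 0 1 \<noteq> 0" "Xc x 1 1 1 \<noteq> 0" using nz[OF _ one] by auto
      have nzj: "Xc x j 0 0 \<noteq> 0" "Xc x j 1 0 \<noteq> 0" using nz[OF j] by auto
      have efc: "e = 0 \<and> f = 0 \<or> e = 0 \<and> f = 1 \<or> e = 1 \<and> f = 0 \<or> e = 1 \<and> f = 1" using ef by auto
      show "Xc (actL n L (sl n y)) j e f = Xc x j e f"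
      proof (cases "j = 1")
        case True
        note a = alg_j1[OF nz1(1,2) lnz l2]
        have s00: "Xs n y j 0 0 = 1/1" using True by (simp add: Xs_def Xsd_def dj_def)
        have s11: "Xs n y j 1 1 = (Xc x 1 0 0 * Xc x 1 1 1)*1/1" using True hA1 by (simp add: Xs_def Xsd_def dj_def)
        have s01: "Xs n y j 0 1 = 1/1" using True by (simp add: Xs_def Xsd_def dj_def)
        have s10: "Xs n y j 1 0 = (Xc x 1 0 1 * Xc x 1 1 0)/1" using True hBj by (simp add: Xs_def Xsd_def dj_def)
        show ?thesis using efc
        proof (elim disjE conjE)
          assume h: "e = 0" "f = 0" show ?thesis by (simp only: h True X00[unfolded True] k0 s00[unfolded True]) (rule a(1))
        next
          assume h: "e = 0" "f = 1" show ?thesis by (simp only: h True X01[unfolded True] k0 k1 s01[unfolded True]) (rule a(3))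
        next
          assume h: "e = 1" "f = 0" show ?thesis by (simp only: h True X10[unfolded True] k0 k1 s10[unfolded True]) (rule a(4))
        next
          assume h: "e = 1" "f = 1" show ?thesis by (simp only: h True X11[unfolded True] k0 k1 s11[unfolded True]) (rule a(2))
        qed
      next
        case False
        then have j2: "2 \<le> j" using j by simp
        define u where "u = 4*(4*Xc x 1 0 1*Xc x 1 1 1)*(4*Xc x j 0 0*Xc x j 1 0)/E"
        have hu: "yu n y j = u" using gu[OF n2 j2 j(2)]
          by (simp add: y_def u_def utq_def uq_def wplus_X wminus_X E_def)
        note a = alg_j2[OF nz1(1,2,3) nzj(1,2) Enz lnz l2 u_def refl]
        have dd: "dj n y j = u*E*(Xc x 1 0 0 * Xc x 1 1 1)" unfolding dj_def hu hE hA1 using False by simp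
        have s00: "Xs n y j 0 0 = (u*E*(Xc x 1 0 0 * Xc x 1 1 1))/(u*E*(Xc x 1 0 0 * Xc x 1 1 1))"
          unfolding Xs_def Xsd_def dd by simp
        have s11: "Xs n y j 1 1 = (Xc x j 0 0 * Xc x j 1 1)*(u*E*(Xc x 1 0 0 * Xc x 1 1 1))/(u*E*(Xc x 1 0 0 * Xc x 1 1 1))"
          unfolding Xs_def Xsd_def dd hAj by simp
        have s01: "Xs n y j 0 1 = 64*(Xc x 1 0 0 * Xc x 1 1 1)^2*(Xc x j 0 1 * Xc x j 1 0)/(u*E*(Xc x 1 0 0 * Xc x 1 1 1))"
          unfolding Xs_def Xsd_def dd hA1 hBj using False by simp
        have s10: "Xs n y j 1 0 = ((u*E)^2/64)/(u*E*(Xc x 1 0 0 * Xc x 1 1 1))"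
          unfolding Xs_def Xsd_def dd hu hE using False by simp
        show ?thesis using efc
        proof (elim disjE conjE)
          assume h: "e = 0" "f = 0" show ?thesis unfolding h X00 k0 s00 by (rule a(1))
        next
          assume h: "e = 0" "f = 1" show ?thesis unfolding h X01 k0 k1 s01 by (rule a(3))
        next
          assume h: "e = 1" "f = 0" show ?thesis unfolding h X10 k0 k1 s10 by (rule a(4))
        next
          assume h: "e = 1" "f = 1" show ?thesis unfolding h X11 k0 k1 s11 by (rule a(2))
        qed
      qed
    qed
  qed
  show ?thesis using Lnz ag unfolding y_def by blast
qed




context fixes n :: nat assumes n2: "n \<ge> 2" begin

lemma yt_pf: "1 \<le> j \<Longrightarrow> j \<le> n - 1 \<Longrightarrow> (\<lambda>y. yt n y j) \<in> polyfuns (Y_coords (4*n-4))"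
  unfolding yt_def by (rule Y_c) (use n2 in arith)
lemma yd_pf: "1 \<le> j \<Longrightarrow> j \<le> n - 1 \<Longrightarrow> (\<lambda>y. yd n y j) \<in> polyfuns (Y_coords (4*n-4))"
  unfolding yd_def by (rule Y_c) (use n2 in arith)
lemma yu_pf: "2 \<le> j \<Longrightarrow> j \<le> n - 1 \<Longrightarrow> (\<lambda>y. yu n y j) \<in> polyfuns (Y_coords (4*n-4))"
  unfolding yu_def by (rule Y_c) (use n2 in arith)
lemma ya_pf: "1 \<le> i \<Longrightarrow> i \<le> n \<Longrightarrow> (\<lambda>y. ya n y i) \<in> polyfuns (Y_coords (4*n-4))"
  unfolding ya_def by (rule Y_c) (use n2 in arith)
lemma yA_pf: "1 \<le> j \<Longrightarrow> j \<le> n - 1 \<Longrightarrow> (\<lambda>y. yA n y j) \<in> polyfuns (Y_coords (4*n-4))"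
  unfolding yA_def by (intro pf_sub pf_divc yt_pf yd_pf)
lemma yB_pf: "1 \<le> j \<Longrightarrow> j \<le> n - 1 \<Longrightarrow> (\<lambda>y. yB n y j) \<in> polyfuns (Y_coords (4*n-4))"
  unfolding yB_def by (intro pf_add pf_divc yt_pf yd_pf)
lemma one: "1 \<le> n - 1" using n2 by simp
lemma yE_pf: "(\<lambda>y. yE n y) \<in> polyfuns (Y_coords (4*n-4))"
  unfolding yE_def using one by (intro pf_sub pf_pow yt_pf yd_pf) auto
lemma dj_pf: "1 \<le> j \<Longrightarrow> j \<le> n - 1 \<Longrightarrow> (\<lambda>y. dj n y j) \<in> polyfuns (Y_coords (4*n-4))"
  unfolding dj_def
  by (cases "j = 1") (simp_all add: pf_const, intro pf_mult yu_pf yE_pf yA_pf one, auto)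
lemma Xsd_pf: "1 \<le> j \<Longrightarrow> j \<le> n - 1 \<Longrightarrow> e < 2 \<Longrightarrow> f < 2 \<Longrightarrow> (\<lambda>y. Xsd n y j e f) \<in> polyfuns (Y_coords (4*n-4))"
proof -
  assume j: "1 \<le> j" "j \<le> n - 1" and ef: "e < 2" "f < 2"
  then consider "e = 0" "f = 0" | "e = 0" "f = 1" | "e = 1" "f = 0" | "e = 1" "f = 1" by arith
  then show ?thesis
  proof cases
    case 1 then show ?thesis using dj_pf[OF j] by (simp add: Xsd_def)
  next
    case 2 then show ?thesis unfolding Xsd_def using j
      by (cases "j = 1") (simp_all add: pf_const, intro pf_mult pf_pow pf_const yA_pf yB_pf one, auto)
  next
    case 3 then show ?thesis unfolding Xsd_def using j
      by (cases "j = 1") (simp_all add: yB_pf one, intro pf_divc pf_mult pf_pow yu_pf yE_pf, auto)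
  next
    case 4 then show ?thesis unfolding Xsd_def using j by (simp, intro pf_mult yA_pf dj_pf, auto)
  qed
qed

definition GY :: "(nat \<Rightarrow> complex) \<Rightarrow> complex" where
  "GY y = (yA n y 1 * yE n y * (\<Prod>j\<in>{2..n-1}. yu n y j)) * (\<Prod>j\<in>{1..n-1}. yd n y j * ((yd n y j)\<^sup>2 - (yt n y j)\<^sup>2))"

lemma GY_pf: "GY \<in> polyfuns (Y_coords (4*n-4))"
proof -
  have "(\<lambda>y. (yA n y 1 * yE n y * (\<Prod>j\<in>{2..n-1}. yu n y j)) * (\<Prod>j\<in>{1..n-1}. yd n y j * ((yd n y j)\<^sup>2 - (yt n y j)\<^sup>2))) \<in> polyfuns (Y_coords (4*n-4))"
    by (intro pf_mult pf_prod pf_sub pf_pow yA_pf yE_pf yu_pf yd_pf yt_pf one) auto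
  then show ?thesis by (simp add: GY_def[abs_def])
qed

lemma GY_good: "GY y \<noteq> 0 \<Longrightarrow> Good n y \<and> BigDelta n (sl n y) \<noteq> 0"
proof -
  assume G: "GY y \<noteq> 0"
  then have g: "Good n y" by (auto simp: GY_def Good_def)
  then show ?thesis using G by (simp add: BigDelta_sl GY_def)
qed

definition ystar :: "nat \<Rightarrow> complex" where
  "ystar k = (if k < n - 1 then 6 else if k < 2*n-2 then -4 else 1)"

lemma GY_star: "GY ystar \<noteq> 0"
proof -
  have t: "yt n ystar j = 6" if "1 \<le> j" "j \<le> n - 1" for j using that by (simp add: yt_def ystar_def)
  have d: "yd n ystar j = -4" if "1 \<le> j" "j \<le> n - 1" for j
  proof -
    have "\<not> n - 2 + j < n - 1" "n - 2 + j < 2*n-2" using that n2 by arith+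
    then show ?thesis by (simp add: yd_def ystar_def)
  qed
  have u: "yu n ystar j = 1" if "2 \<le> j" "j \<le> n - 1" for j
  proof -
    have "\<not> 2*n-4+j < n - 1" "\<not> 2*n-4+j < 2*n-2" using that n2 by arith+
    then show ?thesis by (simp add: yu_def ystar_def)
  qed
  have A: "yA n ystar 1 = 2" using t[OF _ one] d[OF _ one] by (simp add: yA_def)
  have E: "yE n ystar = -20" using t[OF _ one] d[OF _ one] by (simp add: yE_def)
  have p1: "(\<Prod>j\<in>{2..n-1}. yu n ystar j) = 1" by (rule prod.neutral) (auto simp: u)
  have p2: "(\<Prod>j\<in>{1..n-1}. yd n ystar j * ((yd n ystar j)\<^sup>2 - (yt n ystar j)\<^sup>2)) \<noteq> 0"
    by (subst prod_zero_iff) (auto simp: t d)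
  show ?thesis unfolding GY_def A E p1 using p2 by simp
qed

lemma part2: "\<forall>P \<in> polyfuns (Y_coords (4 * n - 4)).
        (\<forall>x. BigDelta n x \<noteq> 0 \<longrightarrow> P (gens n x) = 0) \<longrightarrow> (\<forall>y. P y = 0)"
proof (intro ballI impI allI)
  fix P y assume P: "P \<in> polyfuns (Y_coords (4 * n - 4))" and H: "\<forall>x. BigDelta n x \<noteq> 0 \<longrightarrow> P (gens n x) = 0"
  have "\<forall>y. GY y \<noteq> 0 \<longrightarrow> P y = 0"
  proof (intro allI impI)
    fix y assume "GY y \<noteq> 0"
    then have g: "Good n y" "BigDelta n (sl n y) \<noteq> 0" using GY_good by auto
    have "P y = P (gens n (sl n y))"
      by (rule agreeY_pf[OF P]) (use gens_sl[OF n2 g(1)] in auto)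
    also have "\<dots> = 0" using H g(2) by blast
    finally show "P y = 0" .
  qed
  then show "P y = 0" by (rule vanishY[OF P GY_pf GY_star])
qed

end



definition Xst :: "nat \<Rightarrow> nat \<Rightarrow> complex" where "Xst e f = (if e = 1 \<and> f = 1 then 2 else 1)"
definition xstar :: pt where "xstar = (\<lambda>i. 0, \<lambda>j a b. Minv Xst a b)"

lemma Xc_xstar: "e < 2 \<Longrightarrow> f < 2 \<Longrightarrow> Xc xstar j e f = Xst e f"
  by (simp add: Xc_def xstar_def Xm_Minv)

lemma GX_star: "GX n xstar \<noteq> 0"
proof -
  have dq: "delq xstar j = -4" for j unfolding delq_X by (simp add: Xc_xstar Xst_def)
  have tq: "tq xstar j = 6" for j unfolding tq_X by (simp add: Xc_xstar Xst_def)
  have B: "BigDelta n xstar \<noteq> 0" unfolding BigDelta_def dq tq by simp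
  have "(\<Prod>j\<in>{1..n-1}. \<Prod>e<2. \<Prod>f<2. Xc xstar j e f) \<noteq> 0"
    by (simp add: prod_zero_iff Xc_xstar Xst_def)
  then show ?thesis using B by (simp add: GX_def)
qed

lemma gens_rat:
  assumes n2: "n \<ge> 2"
  shows "\<forall>v\<in>Y_coords (4*n-4). \<exists>c\<in>polyfuns (XT_coords n). \<exists>d\<in>polyfuns (XT_coords n).
     \<forall>x. BigDelta n x \<noteq> 0 \<longrightarrow> d x \<noteq> 0 \<and> v (gens n x) * d x = c x"
proof
  fix v assume "v \<in> Y_coords (4*n-4)"
  then obtain k where v: "v = (\<lambda>y. y k)" and k: "k < 4*n-4" unfolding Y_coords_def by blast
  have one: "1 \<le> n - 1" using n2 by simp
  consider "k < n-1" | "n-1 \<le> k" "k < 2*n-2" | "2*n-2 \<le> k" "k < 3*n-4" | "3*n-4 \<le> k" by arith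
  then show "\<exists>c\<in>polyfuns (XT_coords n). \<exists>d\<in>polyfuns (XT_coords n).
     \<forall>x. BigDelta n x \<noteq> 0 \<longrightarrow> d x \<noteq> 0 \<and> v (gens n x) * d x = c x"
  proof cases
    case 1
    show ?thesis
      by (rule bexI[of _ "\<lambda>x. tq x (k+1)"], rule bexI[of _ "\<lambda>x. 1"])
         (use 1 in \<open>auto simp: v gens_t intro: pf_const tq_pf\<close>)
  next
    case 2
    show ?thesis
      by (rule bexI[of _ "\<lambda>x. delq x (k-(n-1)+1)"], rule bexI[of _ "\<lambda>x. 1"])
         (use 2 in \<open>auto simp: v gens_d intro: pf_const delq_pf\<close>)
  next
    case 3
    show ?thesis
    proof (rule bexI[of _ "\<lambda>x. uq x 1 (k-(2*n-2)+2)"], rule bexI[of _ "\<lambda>x. (delq x 1)\<^sup>2 - (tq x 1)\<^sup>2"])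
      show "(\<lambda>x. (delq x 1)\<^sup>2 - (tq x 1)\<^sup>2) \<in> polyfuns (XT_coords n)" using E1_pf one by blast
      show "(\<lambda>x. uq x 1 (k-(2*n-2)+2)) \<in> polyfuns (XT_coords n)" using 3 one by (intro uq_pf) auto
      show "\<forall>x. BigDelta n x \<noteq> 0 \<longrightarrow> (delq x 1)\<^sup>2 - (tq x 1)\<^sup>2 \<noteq> 0 \<and>
          v (gens n x) * ((delq x 1)\<^sup>2 - (tq x 1)\<^sup>2) = uq x 1 (k-(2*n-2)+2)"
      proof (intro allI impI)
        fix x assume "BigDelta n x \<noteq> 0"
        then have E: "(delq x 1)\<^sup>2 - (tq x 1)\<^sup>2 \<noteq> 0" using BD_nz(2)[OF _ _ one] by simp
        then show "(delq x 1)\<^sup>2 - (tq x 1)\<^sup>2 \<noteq> 0 \<and>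
          v (gens n x) * ((delq x 1)\<^sup>2 - (tq x 1)\<^sup>2) = uq x 1 (k-(2*n-2)+2)"
          using gens_u[OF 3] by (simp add: v utq_def)
      qed
    qed
  next
    case 4
    have i: "1 \<le> k-(3*n-4)+1" "k-(3*n-4)+1 \<le> n" using 4 k by arith+
    show ?thesis
      by (rule bexI[of _ "\<lambda>x. fst x (k-(3*n-4)+1)"], rule bexI[of _ "\<lambda>x. 1"])
         (use 4 k n2 i in \<open>auto simp: v gens_a intro: pf_const XT_fst\<close>)
  qed
qed

lemma phi_rat:
  assumes n2: "n \<ge> 2"
  shows "\<forall>v\<in>XT_coords n. \<exists>c\<in>polyfuns (Y_coords (4*n-4)). \<exists>d\<in>polyfuns (Y_coords (4*n-4)).
     \<forall>y. Good n y \<longrightarrow> d y \<noteq> 0 \<and> v (actL n L0 (sl n y)) * d y = c y"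
proof
  fix v assume "v \<in> XT_coords n"
  then consider i where "v = (\<lambda>x. fst x i)" "1 \<le> i" "i \<le> n"
    | j a b where "v = (\<lambda>x. snd x j a b)" "1 \<le> j" "j \<le> n - 1" "a < 2" "b < 2"
    unfolding XT_coords_def by blast
  then show "\<exists>c\<in>polyfuns (Y_coords (4*n-4)). \<exists>d\<in>polyfuns (Y_coords (4*n-4)).
     \<forall>y. Good n y \<longrightarrow> d y \<noteq> 0 \<and> v (actL n L0 (sl n y)) * d y = c y"
  proof cases
    case 1
    show ?thesis
      by (rule bexI[of _ "\<lambda>y. ya n y i"], rule bexI[of _ "\<lambda>y. 1"])
         (use 1 in \<open>auto simp: fst_actL sl_def intro: pf_const ya_pf[OF n2]\<close>)
  next
    case 2
    define K where "K e f = kL (L0 j) e * kL (L0 n) f * fv e a * fv f b" for e f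
    show ?thesis
    proof (rule bexI[of _ "\<lambda>y. \<Sum>e<2. \<Sum>f<2. K e f * Xsd n y j e f"], rule bexI[of _ "\<lambda>y. dj n y j"])
      show "(\<lambda>y. dj n y j) \<in> polyfuns (Y_coords (4*n-4))" using 2 by (intro dj_pf[OF n2])
      show "(\<lambda>y. \<Sum>e<2. \<Sum>f<2. K e f * Xsd n y j e f) \<in> polyfuns (Y_coords (4*n-4))"
        using 2 by (intro pf_sum pf_mult pf_const Xsd_pf[OF n2]) auto
      show "\<forall>y. Good n y \<longrightarrow> dj n y j \<noteq> 0 \<and> v (actL n L0 (sl n y)) * dj n y j = (\<Sum>e<2. \<Sum>f<2. K e f * Xsd n y j e f)"
      proof (intro allI impI conjI)
        fix y assume g: "Good n y"
        show d: "dj n y j \<noteq> 0" using dj_nz[OF g] 2 by blast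
        have "v (actL n L0 (sl n y)) = Minv (Xc (actL n L0 (sl n y)) j) a b"
          using 2 Minv_Xm by (simp add: Xc_def)
        also have "\<dots> = (\<Sum>e<2. \<Sum>f<2. K e f * Xs n y j e f)"
          using 2 by (simp add: Minv_def sum2 Xc_actL Xc_sl K_def algebra_simps)
        finally have eq: "v (actL n L0 (sl n y)) = (\<Sum>e<2. \<Sum>f<2. K e f * Xs n y j e f)" .
        have t: "K e f * Xs n y j e f * dj n y j = K e f * Xsd n y j e f" for e f using d by (simp add: Xs_def)
        show "v (actL n L0 (sl n y)) * dj n y j = (\<Sum>e<2. \<Sum>f<2. K e f * Xsd n y j e f)"
          unfolding eq sum_distrib_right t ..
      qed
    qed
  qed
qed




lemma part3:
  assumes n2: "n \<ge> 2"
  shows "\<forall>p \<in> polyfuns (XT_coords n). \<forall>q \<in> polyfuns (XT_coords n).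
        (\<exists>x. q x \<noteq> 0) \<and>
        (\<forall>rc rs x. W'_param n rc rs \<longrightarrow>
            p (W'_act n rc rs x) * q x = q (W'_act n rc rs x) * p x)
        \<longrightarrow>
        (\<exists>P \<in> polyfuns (Y_coords (4 * n - 4)). \<exists>Q \<in> polyfuns (Y_coords (4 * n - 4)).
           (\<exists>y. Q y \<noteq> 0) \<and>
           (\<forall>x. BigDelta n x \<noteq> 0 \<longrightarrow> p x * Q (gens n x) = q x * P (gens n x)))"
proof (intro ballI impI)
  fix p q
  assume p: "p \<in> polyfuns (XT_coords n)" and q: "q \<in> polyfuns (XT_coords n)"
    and h: "(\<exists>x. q x \<noteq> 0) \<and> (\<forall>rc rs x. W'_param n rc rs \<longrightarrow>
            p (W'_act n rc rs x) * q x = q (W'_act n rc rs x) * p x)"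
  from h obtain x1 where qx1: "q x1 \<noteq> 0" by blast
  have Hinv: "\<And>rc rs x. W'_param n rc rs \<Longrightarrow> p (W'_act n rc rs x) * q x = q (W'_act n rc rs x) * p x"
    using h by blast
  obtain x0 where x0: "GX n x0 \<noteq> 0" "q x0 \<noteq> 0" using both_nz[OF GX_pf q GX_star qx1] by blast
  obtain L0 where L0nz: "\<forall>i. 1 \<le> i \<and> i \<le> n \<longrightarrow> L0 i \<noteq> 0"
    and ag0: "agree n (actL n L0 (sl n (gens n x0))) x0" using S1[OF n2 x0(1)] by blast
  note R = ratsub[OF phi_rat[OF n2, of L0]]
  obtain Hp dp where Hp: "Hp \<in> polyfuns (Y_coords (4*n-4))" "dp \<in> polyfuns (Y_coords (4*n-4))"
    "\<forall>y. Good n y \<longrightarrow> dp y \<noteq> 0 \<and> p (actL n L0 (sl n y)) * dp y = Hp y"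
    using R[OF p] by blast
  obtain Hq dq where Hq: "Hq \<in> polyfuns (Y_coords (4*n-4))" "dq \<in> polyfuns (Y_coords (4*n-4))"
    "\<forall>y. Good n y \<longrightarrow> dq y \<noteq> 0 \<and> q (actL n L0 (sl n y)) * dq y = Hq y"
    using R[OF q] by blast
  define P where "P y = Hp y * dq y" for y
  define Q where "Q y = Hq y * dp y" for y
  have Ppf: "P \<in> polyfuns (Y_coords (4*n-4))"
    using pf_mult[OF Hp(1) Hq(2)] by (simp add: P_def[abs_def])
  have Qpf: "Q \<in> polyfuns (Y_coords (4*n-4))"
    using pf_mult[OF Hq(1) Hp(2)] by (simp add: Q_def[abs_def])
  have PQ: "Good n y \<Longrightarrow> P y = p (actL n L0 (sl n y)) * dp y * dq y \<and> Q y = q (actL n L0 (sl n y)) * dp y * dq y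
     \<and> dp y \<noteq> 0 \<and> dq y \<noteq> 0" for y
    using Hp(3) Hq(3) by (auto simp: P_def Q_def algebra_simps)
  have g0: "Good n (gens n x0)" using Good_gens[OF n2 x0(1)] .
  have "q (actL n L0 (sl n (gens n x0))) = q x0" using agree_pf[OF q ag0] .
  then have Qy0: "Q (gens n x0) \<noteq> 0" using PQ[OF g0] x0(2) by simp
  have key: "p x * Q (gens n x) = q x * P (gens n x)" if Gx: "GX n x \<noteq> 0" for x
  proof -
    define y where "y = gens n x"
    have g: "Good n y" using Good_gens[OF n2 Gx] by (simp add: y_def)
    obtain L where Lnz: "\<forall>i. 1 \<le> i \<and> i \<le> n \<longrightarrow> L i \<noteq> 0"
      and agL: "agree n (actL n L (sl n y)) x" using S1[OF n2 Gx] by (auto simp: y_def)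
    define L' where "L' i = L i / L0 i" for i
    have L'nz: "\<forall>i. 1 \<le> i \<and> i \<le> n \<longrightarrow> L' i \<noteq> 0" using Lnz L0nz by (simp add: L'_def)
    have W: "W'_param n (\<lambda>i. lc (L' i)) (\<lambda>i. ls (L' i))" by (rule W'_param_L[OF L'nz])
    have comp: "agree n (actL n L' (actL n L0 (sl n y))) (actL n L (sl n y))"
      by (rule agree_comp[OF _ n2]) (use L0nz in \<open>simp add: L'_def\<close>)
    have ag: "agree n (actL n L' (actL n L0 (sl n y))) x" by (rule agree_trans[OF comp agL])
    have inv: "p (actL n L' (actL n L0 (sl n y))) * q (actL n L0 (sl n y)) =
               q (actL n L' (actL n L0 (sl n y))) * p (actL n L0 (sl n y))"
      using Hinv[OF W] by (simp add: actL_def)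
    then have "p x * q (actL n L0 (sl n y)) = q x * p (actL n L0 (sl n y))"
      using agree_pf[OF p ag] agree_pf[OF q ag] by simp
    then have "p x * q (actL n L0 (sl n y)) * (dp y * dq y) = q x * p (actL n L0 (sl n y)) * (dp y * dq y)"
      by simp
    then show ?thesis using PQ[OF g] unfolding y_def[symmetric] by (simp add: algebra_simps)
  qed
  note R2 = ratsub[OF gens_rat[OF n2]]
  obtain HP dP where HP: "HP \<in> polyfuns (XT_coords n)" "dP \<in> polyfuns (XT_coords n)"
    "\<forall>x. BigDelta n x \<noteq> 0 \<longrightarrow> dP x \<noteq> 0 \<and> P (gens n x) * dP x = HP x"
    using R2[OF Ppf] by blast
  obtain HQ dQ where HQ: "HQ \<in> polyfuns (XT_coords n)" "dQ \<in> polyfuns (XT_coords n)"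
    "\<forall>x. BigDelta n x \<noteq> 0 \<longrightarrow> dQ x \<noteq> 0 \<and> Q (gens n x) * dQ x = HQ x"
    using R2[OF Qpf] by blast
  define K where "K x = p x * HQ x * dP x - q x * HP x * dQ x" for x
  have Kpf: "K \<in> polyfuns (XT_coords n)"
  proof -
    have "(\<lambda>x. p x * HQ x * dP x - q x * HP x * dQ x) \<in> polyfuns (XT_coords n)"
      by (intro pf_sub pf_mult p q HP HQ)
    then show ?thesis by (simp add: K_def[abs_def])
  qed
  have Kform: "K x = (p x * Q (gens n x) - q x * P (gens n x)) * (dP x * dQ x)" if "BigDelta n x \<noteq> 0" for x
  proof -
    have a: "HP x = P (gens n x) * dP x" "HQ x = Q (gens n x) * dQ x" using HP(3)[rule_format, OF that] HQ(3)[rule_format, OF that] by simp_all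
    show ?thesis unfolding K_def a by (simp add: algebra_simps)
  qed
  have "\<forall>x. GX n x \<noteq> 0 \<longrightarrow> K x = 0"
  proof (intro allI impI)
    fix x assume Gx: "GX n x \<noteq> 0"
    then have "BigDelta n x \<noteq> 0" by (rule GX_nz(1))
    then show "K x = 0" using Kform key[OF Gx] by simp
  qed
  then have K0: "K x = 0" for x by (rule vanishXT[OF Kpf GX_pf GX_star])
  have fin: "\<forall>x. BigDelta n x \<noteq> 0 \<longrightarrow> p x * Q (gens n x) = q x * P (gens n x)"
  proof (intro allI impI)
    fix x assume B: "BigDelta n x \<noteq> 0"
    then have "dP x * dQ x \<noteq> 0" using HP(3)[rule_format, OF B] HQ(3)[rule_format, OF B] by simp
    then show "p x * Q (gens n x) = q x * P (gens n x)" using Kform[OF B] K0[of x] by simp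
  qed
  show "\<exists>P \<in> polyfuns (Y_coords (4 * n - 4)). \<exists>Q \<in> polyfuns (Y_coords (4 * n - 4)).
           (\<exists>y. Q y \<noteq> 0) \<and>
           (\<forall>x. BigDelta n x \<noteq> 0 \<longrightarrow> p x * Q (gens n x) = q x * P (gens n x))"
    using Ppf Qpf Qy0 fin by blast
qed



theorem corollary8p12:
  fixes n :: nat
  assumes "n \<ge> 2"
  shows
    \<comment> \<open>the generators are W'-invariant (on the open set Delta \<noteq> 0, which is W'-stable)\<close>
    "(\<forall>rc rs x. W'_param n rc rs \<and> BigDelta n x \<noteq> 0 \<longrightarrow>
        BigDelta n (W'_act n rc rs x) \<noteq> 0 \<and> gens n (W'_act n rc rs x) = gens n x)
     \<and>
    \<comment> \<open>they are algebraically independent over C\<close>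
     (\<forall>P \<in> polyfuns (Y_coords (4 * n - 4)).
        (\<forall>x. BigDelta n x \<noteq> 0 \<longrightarrow> P (gens n x) = 0) \<longrightarrow> (\<forall>y. P y = 0))
     \<and>
    \<comment> \<open>every W'-invariant rational function p/q is a rational function of them\<close>
     (\<forall>p \<in> polyfuns (XT_coords n). \<forall>q \<in> polyfuns (XT_coords n).
        (\<exists>x. q x \<noteq> 0) \<and>
        (\<forall>rc rs x. W'_param n rc rs \<longrightarrow>
            p (W'_act n rc rs x) * q x = q (W'_act n rc rs x) * p x)
        \<longrightarrow>
        (\<exists>P \<in> polyfuns (Y_coords (4 * n - 4)). \<exists>Q \<in> polyfuns (Y_coords (4 * n - 4)).
           (\<exists>y. Q y \<noteq> 0) \<and>
           (\<forall>x. BigDelta n x \<noteq> 0 \<longrightarrow> p x * Q (gens n x) = q x * P (gens n x))))"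
    using part1[OF assms] part2[OF assms] part3[OF assms] by blast

end
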